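(* Let $\mathcal{X}$ be an input set, $\mathcal{Y}$ an output set, and $\mathcal{F}$ a set of models $f:\mathcal{X}\to\mathcal{Y}$. Let $n,m\ge 1$. For $i=1,\dots,n$ let $t_i=(p_i,S_i,\ell_i)$ be a learning task, where $p_i$ is a probability distribution on $\mathcal{X}\times\mathcal{Y}$, $\ell_i:\mathcal{Y}\times\mathcal{Y}\to[0,1]$ is a loss function, and $S_i=\{(x_{i,1},y_{i,1}),\dots,(x_{i,m},y_{i,m})\}$ is a sample of size $m$ drawn i.i.d. from $p_i$, the samples $S_1,\dots,S_n$ being drawn independently of each other. Let $\mathcal{E}$ be a set and let $l:\mathcal{E}\to\mathbb{N}$ be the length function of a prefix-free encoding of $\mathcal{E}$. For each $E\in\mathcal{E}$, let $l_E:\bigcup_{k=1}^\infty\mathcal{F}^k\to\mathbb{N}$ be the length function of a prefix-free encoding of $\bigcup_{k=1}^\infty\mathcal{F}^k$. Then for any $\delta>0$, with probability at least $1-\delta$ over the sampling of $S_1,\dots,S_n$, for all $E\in\mathcal{E}$ and all $f_1,\dots,f_n\in\mathcal{F}$: $$\mathcal{R}(f_1,\dots,f_n)\le \mathrm{kl}^{-1}\!\left(\widehat{\mathcal{R}}(f_1,\dots,f_n)\,\middle|\,\frac{\big(l(E)+l_E(f_1,\dots,f_n)\big)\log 2+\log\frac{2\sqrt{mn}}{\delta}}{mn}\right).$$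
   Context: A (prefix-free) encoding of a set $\mathcal{Z}$ is a map $C:\mathcal{Z}\to\{0,1\}^*$ such that for all $z\neq z'$, $C(z)$ is not a prefix of $C(z')$; its length function is $z\mapsto$ length of $C(z)$. $\mathcal{R}(f_1,\dots,f_n)=\frac1n\sum_{i=1}^n \mathbb{E}_{(x,y)\sim p_i}\ell_i(y,f_i(x))$ and $\widehat{\mathcal{R}}(f_1,\dots,f_n)=\frac{1}{mn}\sum_{i=1}^n\sum_{j=1}^m \ell_i(y_{i,j},f_i(x_{i,j}))$. For $q,p\in[0,1]$, $\mathrm{kl}(q|p)=q\log\frac{q}{p}+(1-q)\log\frac{1-q}{1-p}$ (Bernoulli KL divergence), and $\mathrm{kl}^{-1}(q|b)=\sup\{p\in[0,1]:\mathrm{kl}(q|p)\le b\}$. *)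

theory Defs
  imports "HOL-Probability.Probability" "HOL-Library.Sublist"
begin

definition prefix_free_on :: "('a \<Rightarrow> bool list) \<Rightarrow> 'a set \<Rightarrow> bool" where
  "prefix_free_on C A \<longleftrightarrow> (\<forall>z\<in>A. \<forall>z'\<in>A. z \<noteq> z' \<longrightarrow> \<not> prefix (C z) (C z'))"

definition is_code_length :: "('a \<Rightarrow> nat) \<Rightarrow> 'a set \<Rightarrow> bool" where
  "is_code_length L A \<longleftrightarrow> (\<exists>C. prefix_free_on C A \<and> (\<forall>z\<in>A. L z = length (C z)))"

definition xlog_ratio :: "real \<Rightarrow> real \<Rightarrow> ereal" where
  "xlog_ratio a b = (if a = 0 then 0 else if b = 0 then \<infinity> else ereal (a * ln (a / b)))"

definition kl :: "real \<Rightarrow> real \<Rightarrow> ereal" where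
  "kl q p = xlog_ratio q p + xlog_ratio (1 - q) (1 - p)"

definition kl_inv :: "real \<Rightarrow> real \<Rightarrow> real" where
  "kl_inv q b = Sup {p \<in> {0..1}. kl q p \<le> ereal b}"

definition true_risk ::
  "nat \<Rightarrow> (nat \<Rightarrow> ('x \<times> 'y) measure) \<Rightarrow> (nat \<Rightarrow> 'y \<Rightarrow> 'y \<Rightarrow> real) \<Rightarrow> (nat \<Rightarrow> 'x \<Rightarrow> 'y) \<Rightarrow> real" where
  "true_risk n p loss f = (1 / real n) * (\<Sum>i<n. \<integral>z. loss i (snd z) (f i (fst z)) \<partial>(p i))"

text \<open>Empirical multi-task risk; the sample s maps (i,j) to the j-th example of task i.\<close>
definition emp_risk ::
  "nat \<Rightarrow> nat \<Rightarrow> (nat \<Rightarrow> 'y \<Rightarrow> 'y \<Rightarrow> real) \<Rightarrow> (nat \<times> nat \<Rightarrow> 'x \<times> 'y) \<Rightarrow> (nat \<Rightarrow> 'x \<Rightarrow> 'y) \<Rightarrow> real" where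
  "emp_risk n m loss s f = (1 / (real m * real n)) *
     (\<Sum>i<n. \<Sum>j<m. loss i (snd (s (i, j))) (f i (fst (s (i, j)))))"

definition sample_measure :: "nat \<Rightarrow> nat \<Rightarrow> (nat \<Rightarrow> ('x \<times> 'y) measure) \<Rightarrow> (nat \<times> nat \<Rightarrow> 'x \<times> 'y) measure" where
  "sample_measure n m p = PiM ({..<n} \<times> {..<m}) (\<lambda>ij. p (fst ij))"

end

theory Submission
  imports Defs
begin

definition pfree :: "bool list set \<Rightarrow> bool" where
  "pfree W \<longleftrightarrow> (\<forall>u\<in>W. \<forall>v\<in>W. u \<noteq> v \<longrightarrow> \<not> prefix u v)"

lemma pfree_sub: "pfree W \<Longrightarrow> V \<subseteq> W \<Longrightarrow> pfree V"
  unfolding pfree_def by blast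

lemma kraft_aux:
  "\<forall>W. finite W \<and> pfree W \<and> (\<forall>w\<in>W. length w \<le> k) \<longrightarrow> (\<Sum>w\<in>W. (1/2::real)^length w) \<le> 1"
proof (induction k)
  case 0
  show ?case
  proof (intro allI impI)
    fix W :: "bool list set" assume h: "finite W \<and> pfree W \<and> (\<forall>w\<in>W. length w \<le> 0)"
    then have "W \<subseteq> {[]}" by auto
    then have "W = {} \<or> W = {[]}" by blast
    then show "(\<Sum>w\<in>W. (1/2::real)^length w) \<le> 1" by auto
  qed
next
  case (Suc k)
  show ?case
  proof (intro allI impI)
    fix W :: "bool list set" assume h: "finite W \<and> pfree W \<and> (\<forall>w\<in>W. length w \<le> Suc k)"
    show "(\<Sum>w\<in>W. (1/2::real)^length w) \<le> 1"
    proof (cases "[] \<in> W")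
      case True
      have "W = {[]}"
      proof -
        have "\<forall>v\<in>W. v = []" using True h unfolding pfree_def by (metis Nil_prefix)
        then show ?thesis using True by blast
      qed
      then show ?thesis by simp
    next
      case False
      define W1 where "W1 = Cons True -` W"
      define W0 where "W0 = Cons False -` W"
      have fin1: "finite W1" unfolding W1_def using h by (intro finite_vimageI) auto
      have fin0: "finite W0" unfolding W0_def using h by (intro finite_vimageI) auto
      have pf1: "pfree W1" unfolding pfree_def W1_def
      proof (intro ballI impI)
        fix u v assume a: "u \<in> Cons True -` W" "v \<in> Cons True -` W" "u \<noteq> v"
        then have "True#u \<in> W" "True#v \<in> W" "True#u \<noteq> True#v" by auto
        then have "\<not> prefix (True#u) (True#v)" using h unfolding pfree_def by blast
        then show "\<not> prefix u v" by simp
      qed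
      have pf0: "pfree W0" unfolding pfree_def W0_def
      proof (intro ballI impI)
        fix u v assume a: "u \<in> Cons False -` W" "v \<in> Cons False -` W" "u \<noteq> v"
        then have "False#u \<in> W" "False#v \<in> W" "False#u \<noteq> False#v" by auto
        then have "\<not> prefix (False#u) (False#v)" using h unfolding pfree_def by blast
        then show "\<not> prefix u v" by simp
      qed
      have l1: "\<forall>w\<in>W1. length w \<le> k" using h unfolding W1_def by fastforce
      have l0: "\<forall>w\<in>W0. length w \<le> k" using h unfolding W0_def by fastforce
      have s1: "(\<Sum>w\<in>W1. (1/2::real)^length w) \<le> 1" using Suc fin1 pf1 l1 by blast
      have s0: "(\<Sum>w\<in>W0. (1/2::real)^length w) \<le> 1" using Suc fin0 pf0 l0 by blast
      have WW: "W = Cons True ` W1 \<union> Cons False ` W0"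
      proof
        show "W \<subseteq> Cons True ` W1 \<union> Cons False ` W0"
        proof
          fix w assume "w \<in> W"
          with False obtain b v where "w = b # v" by (cases w) auto
          then show "w \<in> Cons True ` W1 \<union> Cons False ` W0"
            using \<open>w \<in> W\<close> unfolding W1_def W0_def by (cases b) auto
        qed
      qed (auto simp: W1_def W0_def)
      have "(\<Sum>w\<in>W. (1/2::real)^length w) =
          (\<Sum>w\<in>Cons True ` W1. (1/2::real)^length w) + (\<Sum>w\<in>Cons False ` W0. (1/2::real)^length w)"
        unfolding WW by (rule sum.union_disjoint) (use fin1 fin0 in auto)
      also have "\<dots> = (1/2) * (\<Sum>w\<in>W1. (1/2::real)^length w) + (1/2) * (\<Sum>w\<in>W0. (1/2::real)^length w)"
        by (simp add: sum.reindex sum_distrib_left)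
      also have "\<dots> \<le> 1" using s1 s0 by simp
      finally show ?thesis .
    qed
  qed
qed

lemma kraft_finite:
  assumes "finite W" "pfree W"
  shows "(\<Sum>w\<in>W. (1/2::real)^length w) \<le> 1"
proof -
  have "\<forall>w\<in>W. length w \<le> Max (length ` W)" using assms(1) by auto
  then show ?thesis using kraft_aux assms by blast
qed


lemma kraft_countable:
  assumes "pfree W"
  shows "(\<integral>\<^sup>+w. ennreal ((1/2)^length w) \<partial>count_space W) \<le> 1"
proof (cases "finite W")
  case True
  then show ?thesis using kraft_finite[OF True assms]
    by (simp add: nn_integral_count_space_finite sum_ennreal)
next
  case False
  have cW: "countable W" by (rule countable_subset[of _ UNIV]) auto
  note bij = bij_betw_from_nat_into[OF cW False]
  have "(\<integral>\<^sup>+w. ennreal ((1/2)^length w) \<partial>count_space W)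
      = (\<integral>\<^sup>+k. ennreal ((1/2)^length (from_nat_into W k)) \<partial>count_space UNIV)"
    by (rule nn_integral_bij_count_space[symmetric, OF bij])
  also have "\<dots> = (\<Sum>k. ennreal ((1/2)^length (from_nat_into W k)))"
    by (rule nn_integral_count_space_nat)
  also have "\<dots> \<le> 1"
    unfolding suminf_eq_SUP
  proof (rule SUP_least)
    fix K :: nat
    have inj: "inj_on (from_nat_into W) {..<K}"
      using bij unfolding bij_betw_def by (auto intro: inj_on_subset)
    have sub: "from_nat_into W ` {..<K} \<subseteq> W"
      using bij unfolding bij_betw_def by auto
    have "(\<Sum>k<K. ennreal ((1/2)^length (from_nat_into W k)))
        = ennreal (\<Sum>w\<in>from_nat_into W ` {..<K}. (1/2)^length w)"
      by (simp add: sum.reindex[OF inj] sum_ennreal)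
    also have "\<dots> \<le> 1"
      using kraft_finite[of "from_nat_into W ` {..<K}"] pfree_sub[OF assms sub] by simp
    finally show "(\<Sum>k<K. ennreal ((1/2)^length (from_nat_into W k))) \<le> 1" .
  qed
  finally show ?thesis .
qed

lemma emeasure_UN_le_count:
  assumes I: "countable I" and sets: "\<And>i. i \<in> I \<Longrightarrow> X i \<in> sets M"
  shows "emeasure M (\<Union>(X ` I)) \<le> (\<integral>\<^sup>+i. emeasure M (X i) \<partial>count_space I)"
proof -
  have le: "indicator (\<Union>(X ` I)) x \<le> (\<integral>\<^sup>+ i. indicator (X i) x \<partial>count_space I)" for x
  proof cases
    assume x: "x \<in> \<Union>(X ` I)"
    then obtain j where j: "x \<in> X j" "j \<in> I" by auto
    have "(1::ennreal) = (\<integral>\<^sup>+ i. indicator {j} i \<partial>count_space I)"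
      using j by (subst nn_integral_count_space'[where A="{j}"]) auto
    also have "\<dots> \<le> (\<integral>\<^sup>+ i. indicator (X i) x \<partial>count_space I)"
      by (rule nn_integral_mono) (use j in \<open>auto split: split_indicator\<close>)
    finally show ?thesis using x by simp
  qed simp
  have [measurable]: "\<Union>(X ` I) \<in> sets M"
    using sets I by (intro sets.countable_UN') auto
  have "emeasure M (\<Union>(X ` I)) = (\<integral>\<^sup>+x. indicator (\<Union>(X ` I)) x \<partial>M)"
    by simp
  also have "\<dots> \<le> (\<integral>\<^sup>+x. \<integral>\<^sup>+ i. indicator (X i) x \<partial>count_space I \<partial>M)"
    by (rule nn_integral_mono) (rule le)
  also have "\<dots> = (\<integral>\<^sup>+i. \<integral>\<^sup>+x. indicator (X i) x \<partial>M \<partial>count_space I)"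
    using sets by (intro nn_integral_count_space_nn_integral I) auto
  also have "\<dots> = (\<integral>\<^sup>+i. emeasure M (X i) \<partial>count_space I)"
    by (intro nn_integral_cong) (use sets in auto)
  finally show ?thesis .
qed


lemma exp_chord:
  fixes a x :: real assumes "0 \<le> x" "x \<le> 1"
  shows "exp (- a * x) \<le> 1 - x + x * exp (- a)"
proof -
  have "exp ((1 - x) *\<^sub>R 0 + x *\<^sub>R (- a)) \<le> (1 - x) * exp 0 + x * exp (- a)"
    by (rule convex_onD[OF exp_convex]) (use assms in auto)
  then show ?thesis by (simp add: mult.commute)
qed

lemma amgm_pow:
  fixes x :: "nat \<Rightarrow> real" assumes "n \<ge> 1" "\<And>i. i < n \<Longrightarrow> x i \<ge> 0"
  shows "(\<Prod>i<n. x i) \<le> ((\<Sum>i<n. x i) / n) ^ n"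
proof -
  have ne: "{..<n} \<noteq> {}" using assms by (auto simp: lessThan_empty_iff)
  have A: "(\<Sum>i<n. x i / card {..<n}) \<ge> (\<Prod>i<n. x i) powr (1 / card {..<n})"
    by (rule arith_geom_mean) (use assms ne in auto)
  define P where "P = (\<Prod>i<n. x i)"
  have P0: "P \<ge> 0" unfolding P_def using assms by (auto intro: prod_nonneg)
  have "(\<Sum>i<n. x i / n) = (\<Sum>i<n. x i) / n" by (simp add: sum_divide_distrib)
  with A have B: "P powr (1 / n) \<le> (\<Sum>i<n. x i) / n" by (simp add: P_def)
  show ?thesis
  proof (cases "P = 0")
    case True
    have "0 \<le> (\<Sum>i<n. x i)" using assms by (auto intro: sum_nonneg)
    then have "0 \<le> (\<Sum>i<n. x i) / n" by simp
    then show ?thesis using True unfolding P_def[symmetric] by simp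
  next
    case False
    then have Pp: "P > 0" using P0 by simp
    have "(P powr (1/n)) ^ n = P"
    proof -
      have "(P powr (1/n)) ^ n = (P powr (1/n)) powr (real n)"
        by (rule powr_realpow[symmetric]) (use Pp in simp)
      also have "\<dots> = P" using assms P0 by (simp add: powr_powr)
      finally show ?thesis .
    qed
    moreover have "(P powr (1/n)) ^ n \<le> ((\<Sum>i<n. x i) / n) ^ n"
      by (rule power_mono[OF B]) simp
    ultimately show ?thesis by (simp add: P_def)
  qed
qed


lemma chernoff:
  fixes p :: "nat \<Rightarrow> ('x \<times> 'y) measure" and loss :: "nat \<Rightarrow> 'y \<Rightarrow> 'y \<Rightarrow> real"
    and g :: "nat \<Rightarrow> 'x \<Rightarrow> 'y" and a t :: real
  assumes n1: "n \<ge> 1" and m1: "m \<ge> 1"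
    and ps: "\<And>i. i < n \<Longrightarrow> prob_space (p i)"
    and lb: "\<And>i y y'. i < n \<Longrightarrow> 0 \<le> loss i y y' \<and> loss i y y' \<le> 1"
    and meas: "\<And>i. i < n \<Longrightarrow> (\<lambda>z. loss i (snd z) (g i (fst z))) \<in> borel_measurable (p i)"
    and a0: "a \<ge> 0"
  shows "measure (sample_measure n m p) {s \<in> space (sample_measure n m p). emp_risk n m loss s g \<le> t}
         \<le> (exp (a*t) * (1 - true_risk n p loss g + true_risk n p loss g * exp (-a)))^(m*n)"
proof -
  define I where "I = {..<n} \<times> {..<m}"
  define M' where "M' = (\<lambda>ij::nat\<times>nat. if fst ij < n then p (fst ij) else p 0)"
  define L where "L = (\<lambda>ij::nat\<times>nat. \<lambda>z::'x\<times>'y. loss (fst ij) (snd z) (g (fst ij) (fst z)))"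
  define mu where "mu = (\<lambda>i. \<integral>z. loss i (snd z) (g i (fst z)) \<partial>p i)"
  define R where "R = true_risk n p loss g"
  define N where "N = m*n"
  define S where "S = sample_measure n m p"
  have psM: "prob_space (M' ij)" for ij using ps n1 by (simp add: M'_def)
  interpret PP: product_prob_space M' by (rule product_prob_spaceI) (rule psM)
  have S_eq: "S = PiM I M'" unfolding S_def sample_measure_def I_def M'_def
    by (rule PiM_cong) auto
  interpret S: prob_space S unfolding S_eq by (rule prob_space_PiM) (rule psM)
  have finI: "finite I" unfolding I_def by simp
  have cardI: "card I = N" unfolding I_def N_def by (simp add: card_cartesian_product)
  have measL[measurable]: "L ij \<in> borel_measurable (M' ij)" if "ij \<in> I" for ij
    using meas that unfolding L_def M'_def I_def by auto
  have Lb: "0 \<le> L ij z \<and> L ij z \<le> 1" if "ij \<in> I" for ij z using lb that unfolding L_def I_def by auto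
  have emp_eq: "emp_risk n m loss s g = (\<Sum>ij\<in>I. L ij (s ij)) / N" for s
    unfolding emp_risk_def I_def L_def N_def
    by (simp add: sum.cartesian_product split_def)
  have measemp[measurable]: "(\<lambda>s. \<Sum>ij\<in>I. L ij (s ij)) \<in> borel_measurable S"
    unfolding S_eq using measL by measurable
  define Fp where "Fp = (\<lambda>s. exp (a*N*t) * (\<Prod>ij\<in>I. exp (- a * L ij (s ij))))"
  define A where "A = {s \<in> space S. emp_risk n m loss s g \<le> t}"
  have Npos: "N > 0" unfolding N_def using n1 m1 by simp
  have A_meas: "A \<in> sets S" unfolding A_def emp_eq by measurable
  have measFp[measurable]: "Fp \<in> borel_measurable S"
    unfolding Fp_def S_eq using measL by measurable
  have Fp_bound: "\<bar>Fp s\<bar> \<le> exp (a*N*t)" if "s \<in> space S" for s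
  proof -
    have "(\<Prod>ij\<in>I. exp (- a * L ij (s ij))) \<le> (\<Prod>ij\<in>I. 1)"
      by (rule prod_mono) (use Lb a0 in auto)
    moreover have "0 \<le> (\<Prod>ij\<in>I. exp (- a * L ij (s ij)))" by (rule prod_nonneg) simp
    ultimately show ?thesis unfolding Fp_def by (simp add: abs_mult mult_left_le)
  qed
  have intFp: "integrable S Fp"
    by (rule S.integrable_const_bound[where B="exp (a*N*t)"]) (use Fp_bound in auto)
  have ind_le: "indicator A s \<le> Fp s" if "s \<in> space S" for s
  proof -
    have P: "(\<Prod>ij\<in>I. exp (- a * L ij (s ij))) = exp (- a * (\<Sum>ij\<in>I. L ij (s ij)))"
      using finI by (simp add: exp_sum sum_distrib_left)
    have F: "Fp s = exp (a*N*t - a * (\<Sum>ij\<in>I. L ij (s ij)))"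
      unfolding Fp_def P by (simp add: exp_diff exp_minus field_simps)
    show ?thesis
    proof (cases "s \<in> A")
      case True
      then have "(\<Sum>ij\<in>I. L ij (s ij)) / N \<le> t" unfolding A_def emp_eq by simp
      then have "(\<Sum>ij\<in>I. L ij (s ij)) \<le> N * t" using Npos by (simp add: divide_le_eq mult.commute)
      then have "a * (\<Sum>ij\<in>I. L ij (s ij)) \<le> a * (N * t)" using a0 by (rule mult_left_mono)
      then have "1 \<le> Fp s" unfolding F by simp
      then show ?thesis using True by simp
    next
      case False
      then show ?thesis unfolding F by simp
    qed
  qed
  have step1: "measure S A \<le> integral\<^sup>L S Fp"
  proof -
    have "measure S A = integral\<^sup>L S (indicator A)" using A_meas by simp
    also have "\<dots> \<le> integral\<^sup>L S Fp"
      by (rule integral_mono) (use A_meas intFp ind_le in \<open>auto simp: integrable_indicator_iff less_top[symmetric]\<close>)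
    finally show ?thesis .
  qed
  define c where "c = (\<lambda>i. 1 - mu i + mu i * exp (- a))"
  have mu_b: "0 \<le> mu i \<and> mu i \<le> 1" if "i < n" for i
  proof -
    interpret Pi: prob_space "p i" using ps that .
    have "mu i \<le> \<integral>z. 1 \<partial>p i" unfolding mu_def
      by (rule integral_mono) (use meas that lb in \<open>auto intro!: Pi.integrable_const_bound[where B=1]\<close>)
    moreover have "0 \<le> mu i" unfolding mu_def using lb that by (auto intro!: integral_nonneg)
    ultimately show ?thesis by (simp add: Pi.prob_space)
  qed
  have c0: "0 \<le> c i" if "i < n" for i
  proof -
    have "0 \<le> mu i * exp (-a)" using mu_b[OF that] by simp
    then show ?thesis unfolding c_def using mu_b[OF that] by linarith
  qed
  have int_le: "(\<integral>z. exp (- a * L ij z) \<partial>M' ij) \<le> c (fst ij)" if ij: "ij \<in> I" for ij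
  proof -
    have fi: "fst ij < n" using ij unfolding I_def by auto
    interpret Pi: prob_space "p (fst ij)" using ps fi .
    have M'eq: "M' ij = p (fst ij)" using fi by (simp add: M'_def)
    have mL: "L ij \<in> borel_measurable (p (fst ij))" using measL[OF ij] M'eq by simp
    have iL: "integrable (p (fst ij)) (L ij)"
      by (rule Pi.integrable_const_bound[where B=1]) (use mL Lb[OF ij] in auto)
    have "(\<integral>z. exp (- a * L ij z) \<partial>p (fst ij)) \<le> (\<integral>z. 1 - L ij z + L ij z * exp (- a) \<partial>p (fst ij))"
    proof (rule integral_mono)
      show "integrable (p (fst ij)) (\<lambda>z. exp (- a * L ij z))"
        by (rule Pi.integrable_const_bound[where B=1]) (use mL Lb[OF ij] a0 in auto)
      show "integrable (p (fst ij)) (\<lambda>z. 1 - L ij z + L ij z * exp (- a))"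
        using iL by auto
      show "exp (- a * L ij z) \<le> 1 - L ij z + L ij z * exp (- a)" for z
        using exp_chord Lb[OF ij] by blast
    qed
    also have "\<dots> = 1 - (\<integral>z. L ij z \<partial>p (fst ij)) + (\<integral>z. L ij z \<partial>p (fst ij)) * exp (- a)"
      using iL by (simp add: Pi.prob_space)
    also have "(\<integral>z. L ij z \<partial>p (fst ij)) = mu (fst ij)" unfolding mu_def L_def by simp
    finally show ?thesis using M'eq by (simp add: c_def)
  qed
  have step2: "integral\<^sup>L S Fp = exp (a*N*t) * (\<Prod>ij\<in>I. \<integral>z. exp (- a * L ij z) \<partial>M' ij)"
  proof -
    have "integral\<^sup>L S Fp = exp (a*N*t) * (\<integral>s. (\<Prod>ij\<in>I. exp (- a * L ij (s ij))) \<partial>PiM I M')"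
      unfolding Fp_def S_eq by simp
    also have "(\<integral>s. (\<Prod>ij\<in>I. exp (- a * L ij (s ij))) \<partial>PiM I M') = (\<Prod>ij\<in>I. \<integral>z. exp (- a * L ij z) \<partial>M' ij)"
    proof (rule PP.product_integral_prod[OF finI])
      fix ij assume ij: "ij \<in> I"
      have fm: "finite_measure (M' ij)" using psM[of ij] by (simp add: prob_space_def)
      show "integrable (M' ij) (\<lambda>z. exp (- a * L ij z))"
        by (rule finite_measure.integrable_const_bound[OF fm, where B=1]) (use measL[OF ij] Lb[OF ij] a0 in auto)
    qed
    finally show ?thesis .
  qed
  have step3: "(\<Prod>ij\<in>I. \<integral>z. exp (- a * L ij z) \<partial>M' ij) \<le> (\<Prod>ij\<in>I. c (fst ij))"
  proof (rule prod_mono)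
    fix ij assume ij: "ij \<in> I"
    interpret Mi: prob_space "M' ij" by (rule psM)
    show "0 \<le> (\<integral>z. exp (- a * L ij z) \<partial>M' ij) \<and> (\<integral>z. exp (- a * L ij z) \<partial>M' ij) \<le> c (fst ij)"
      using int_le[OF ij] by (auto intro: integral_nonneg)
  qed
  have step4: "(\<Prod>ij\<in>I. c (fst ij)) = (\<Prod>i<n. c i) ^ m"
  proof -
    have "(\<Prod>ij\<in>I. c (fst ij)) = (\<Prod>i<n. \<Prod>j<m. c i)"
      unfolding I_def by (simp only: prod.cartesian_product split_def)
    also have "\<dots> = (\<Prod>i<n. c i) ^ m" by (simp add: prod_power_distrib)
    finally show ?thesis .
  qed
  have step5: "(\<Prod>i<n. c i) \<le> (1 - R + R * exp (-a)) ^ n"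
  proof -
    have "(\<Prod>i<n. c i) \<le> ((\<Sum>i<n. c i) / n) ^ n" by (rule amgm_pow) (use n1 c0 in auto)
    also have "(\<Sum>i<n. c i) / n = 1 - R + R * exp (-a)"
      using n1 unfolding c_def R_def true_risk_def mu_def
      by (simp add: sum.distrib sum_subtractf sum_distrib_right sum_distrib_left field_simps)
    finally show ?thesis .
  qed
  have c_prod0: "0 \<le> (\<Prod>i<n. c i)" by (rule prod_nonneg) (use c0 in auto)
  have "measure S A \<le> exp (a*N*t) * (\<Prod>ij\<in>I. \<integral>z. exp (- a * L ij z) \<partial>M' ij)"
    using step1 step2 by simp
  also have "\<dots> \<le> exp (a*N*t) * (\<Prod>i<n. c i) ^ m"
    using step3 step4 by (intro mult_left_mono) auto
  also have "\<dots> \<le> exp (a*N*t) * ((1 - R + R * exp (-a)) ^ n) ^ m"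
    by (intro mult_left_mono power_mono step5 c_prod0) auto
  also have "\<dots> = (exp (a*t) * (1 - R + R * exp (-a)))^(m*n)"
  proof -
    have "exp (a*N*t) = exp (a*t) ^ (m*n)"
      using exp_of_nat_mult[of "m*n" "a*t"] unfolding N_def by (simp add: mult_ac)
    then show ?thesis by (simp add: power_mult_distrib power_mult[symmetric] mult.commute)
  qed
  finally show ?thesis unfolding A_def S_def R_def .
qed


lemma kl_exponent:
  fixes t R b :: real
  assumes t0: "0 \<le> t" and tR: "t < R" and R1: "R \<le> 1" and b0: "0 \<le> b"
    and klb: "kl t R > ereal b"
  shows "\<exists>a\<ge>0. exp (a*t) * (1 - R + R * exp (-a)) \<le> exp (-b)"
proof (cases "t = 0")
  case t00: True
  show ?thesis
  proof (cases "R = 1")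
    case True
    show ?thesis by (rule exI[of _ b]) (use b0 t00 True in simp)
  next
    case False
    then have R1': "R < 1" using R1 by simp
    have Rp: "R > 0" using tR t00 by simp
    have "kl t R = ereal (ln (1 / (1 - R)))"
      using t00 R1' unfolding kl_def xlog_ratio_def by simp
    with klb have "ln (1 / (1 - R)) > b" by simp
    then have "exp b < 1 / (1 - R)"
      using R1' by (metis exp_less_cancel_iff exp_ln divide_pos_pos diff_gt_0_iff_gt zero_less_one)
    then have "exp b * (1 - R) < 1" using R1' by (simp add: field_simps)
    then have lt: "1 - R < exp (-b)" by (simp add: exp_minus field_simps)
    define d where "d = exp (-b) - (1 - R)"
    have dp: "d > 0" using lt d_def by simp
    have dR: "d \<le> R" unfolding d_def using b0 by simp
    define a where "a = ln (R / d)"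
    have a0: "a \<ge> 0" unfolding a_def using dp dR Rp by simp
    have "exp (-a) = d / R" unfolding a_def using dp Rp by (simp add: exp_minus exp_ln)
    then have "exp (a*t) * (1 - R + R * exp (-a)) = exp (-b)"
      using t00 Rp unfolding d_def by simp
    then show ?thesis using a0 by auto
  qed
next
  case False
  then have tp: "t > 0" using t0 by simp
  show ?thesis
  proof (cases "R = 1")
    case True
    have t1: "t < 1" using tR True by simp
    define a where "a = b / (1 - t)"
    have a0: "a \<ge> 0" unfolding a_def using b0 t1 by simp
    have "exp (a*t) * (1 - R + R * exp (-a)) = exp (- (a * (1 - t)))"
      using True by (simp add: exp_minus field_simps exp_diff[symmetric] algebra_simps)
    also have "a * (1 - t) = b" unfolding a_def using t1 by simp
    finally show ?thesis using a0 by auto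
  next
    case False
    then have R1': "R < 1" using R1 by simp
    have Rp: "R > 0" using tR tp by simp
    have t1: "t < 1" using tR R1 by simp
    have klr: "kl t R = ereal (t * ln (t / R) + (1 - t) * ln ((1 - t) / (1 - R)))"
      using tp t1 R1' Rp unfolding kl_def xlog_ratio_def by simp
    define k where "k = t * ln (t / R) + (1 - t) * ln ((1 - t) / (1 - R))"
    have kb: "k > b" using klb klr k_def by simp
    define a where "a = ln R + ln (1 - t) - ln t - ln (1 - R)"
    have "ln t + ln (1 - R) < ln R + ln (1 - t)"
    proof -
      have "t * (1 - R) < R * (1 - t)" using tR by (simp add: algebra_simps)
      then have "ln (t * (1 - R)) < ln (R * (1 - t))"
        using ln_less_cancel_iff[of "t*(1-R)" "R*(1-t)"] tp R1' Rp t1 by simp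
      then show ?thesis using tp R1' Rp t1 by (simp add: ln_mult)
    qed
    then have a0: "a \<ge> 0" unfolding a_def by simp
    have ea: "exp (-a) = (t * (1 - R)) / (R * (1 - t))"
      unfolding a_def using tp R1' Rp t1
      by (simp add: exp_minus exp_diff exp_add field_simps)
    have X: "1 - R + R * exp (-a) = (1 - R) / (1 - t)"
      unfolding ea using t1 Rp by (simp add: field_simps)
    have "exp (a*t) * (1 - R + R * exp (-a)) = exp (a * t + ln (1 - R) - ln (1 - t))"
      unfolding X using t1 R1' by (simp add: exp_add exp_diff)
    also have "a * t + ln (1 - R) - ln (1 - t) = - k"
      unfolding a_def k_def using tp R1' Rp t1 by (simp add: ln_div algebra_simps)
    finally have "exp (a*t) * (1 - R + R * exp (-a)) = exp (-k)" .
    also have "\<dots> \<le> exp (-b)" using kb by simp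
    finally show ?thesis using a0 by auto
  qed
qed


lemma emp_meas:
  fixes p :: "nat \<Rightarrow> ('x \<times> 'y) measure" and loss :: "nat \<Rightarrow> 'y \<Rightarrow> 'y \<Rightarrow> real"
    and g :: "nat \<Rightarrow> 'x \<Rightarrow> 'y"
  assumes n1: "n \<ge> 1"
    and meas: "\<And>i. i < n \<Longrightarrow> (\<lambda>z. loss i (snd z) (g i (fst z))) \<in> borel_measurable (p i)"
  shows "(\<lambda>s. emp_risk n m loss s g) \<in> borel_measurable (sample_measure n m p)"
proof -
  define I where "I = {..<n} \<times> {..<m}"
  define M' where "M' = (\<lambda>ij::nat\<times>nat. if fst ij < n then p (fst ij) else p 0)"
  define L where "L = (\<lambda>ij::nat\<times>nat. \<lambda>z::'x\<times>'y. loss (fst ij) (snd z) (g (fst ij) (fst z)))"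
  have S_eq: "sample_measure n m p = PiM I M'" unfolding sample_measure_def I_def M'_def
    by (rule PiM_cong) auto
  have measL[measurable]: "L ij \<in> borel_measurable (M' ij)" if "ij \<in> I" for ij
    using meas that unfolding L_def M'_def I_def by auto
  have emp_eq: "emp_risk n m loss s g = (\<Sum>ij\<in>I. L ij (s ij)) / (m*n)" for s
    unfolding emp_risk_def I_def L_def
    by (simp add: sum.cartesian_product split_def)
  have "(\<lambda>s. (\<Sum>ij\<in>I. L ij (s ij)) / (m*n)) \<in> borel_measurable (PiM I M')"
    using measL by measurable
  then show ?thesis unfolding S_eq emp_eq .
qed

lemma risk_bounds:
  fixes p :: "nat \<Rightarrow> ('x \<times> 'y) measure" and loss :: "nat \<Rightarrow> 'y \<Rightarrow> 'y \<Rightarrow> real"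
    and g :: "nat \<Rightarrow> 'x \<Rightarrow> 'y"
  assumes n1: "n \<ge> 1"
    and ps: "\<And>i. i < n \<Longrightarrow> prob_space (p i)"
    and lb: "\<And>i y y'. i < n \<Longrightarrow> 0 \<le> loss i y y' \<and> loss i y y' \<le> 1"
    and meas: "\<And>i. i < n \<Longrightarrow> (\<lambda>z. loss i (snd z) (g i (fst z))) \<in> borel_measurable (p i)"
  shows "0 \<le> true_risk n p loss g \<and> true_risk n p loss g \<le> 1"
proof -
  define mu where "mu = (\<lambda>i. \<integral>z. loss i (snd z) (g i (fst z)) \<partial>p i)"
  have mu_b: "0 \<le> mu i \<and> mu i \<le> 1" if "i < n" for i
  proof -
    interpret Pi: prob_space "p i" using ps that .
    have "mu i \<le> \<integral>z. 1 \<partial>p i" unfolding mu_def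
      by (rule integral_mono) (use meas that lb in \<open>auto intro!: Pi.integrable_const_bound[where B=1]\<close>)
    moreover have "0 \<le> mu i" unfolding mu_def using lb that by (auto intro!: integral_nonneg)
    ultimately show ?thesis by (simp add: Pi.prob_space)
  qed
  have "(\<Sum>i<n. mu i) \<le> (\<Sum>i<n. 1)" by (rule sum_mono) (use mu_b in auto)
  moreover have "0 \<le> (\<Sum>i<n. mu i)" by (rule sum_nonneg) (use mu_b in auto)
  ultimately show ?thesis using n1 unfolding true_risk_def mu_def[symmetric] by (simp add: field_simps)
qed

lemma chernoff_T:
  fixes p :: "nat \<Rightarrow> ('x \<times> 'y) measure" and loss :: "nat \<Rightarrow> 'y \<Rightarrow> 'y \<Rightarrow> real"
    and g :: "nat \<Rightarrow> 'x \<Rightarrow> 'y" and t b :: real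
  assumes n1: "n \<ge> 1" and m1: "m \<ge> 1"
    and ps: "\<And>i. i < n \<Longrightarrow> prob_space (p i)"
    and lb: "\<And>i y y'. i < n \<Longrightarrow> 0 \<le> loss i y y' \<and> loss i y y' \<le> 1"
    and meas: "\<And>i. i < n \<Longrightarrow> (\<lambda>z. loss i (snd z) (g i (fst z))) \<in> borel_measurable (p i)"
    and b0: "0 \<le> b"
    and t0: "0 \<le> t" and tR: "t < true_risk n p loss g" and klb: "kl t (true_risk n p loss g) > ereal b"
  shows "measure (sample_measure n m p) {s \<in> space (sample_measure n m p). emp_risk n m loss s g \<le> t}
         \<le> exp (- b) ^ (m*n)"
proof -
  define R where "R = true_risk n p loss g"
  have Rb: "0 \<le> R \<and> R \<le> 1" unfolding R_def by (rule risk_bounds[OF n1 ps lb meas])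
  obtain a where a0: "a \<ge> 0" and ab: "exp (a*t) * (1 - R + R * exp (-a)) \<le> exp (-b)"
    using kl_exponent[OF t0 tR[folded R_def] _ b0 klb[folded R_def]] Rb by blast
  have nn: "0 \<le> exp (a*t) * (1 - R + R * exp (-a))"
  proof -
    have "0 \<le> R * exp (-a)" using Rb by simp
    then have "0 \<le> 1 - R + R * exp (-a)" using Rb by linarith
    then show ?thesis by simp
  qed
  have "measure (sample_measure n m p) {s \<in> space (sample_measure n m p). emp_risk n m loss s g \<le> t}
         \<le> (exp (a*t) * (1 - R + R * exp (-a)))^(m*n)"
    unfolding R_def by (rule chernoff[OF n1 m1 ps lb meas a0])
  also have "\<dots> \<le> exp (-b) ^ (m*n)" by (rule power_mono[OF ab nn])
  finally show ?thesis .
qed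


lemma bad_set:
  fixes p :: "nat \<Rightarrow> ('x \<times> 'y) measure" and loss :: "nat \<Rightarrow> 'y \<Rightarrow> 'y \<Rightarrow> real"
    and g :: "nat \<Rightarrow> 'x \<Rightarrow> 'y" and b :: real and T :: "real set"
  assumes n1: "n \<ge> 1" and m1: "m \<ge> 1"
    and ps: "\<And>i. i < n \<Longrightarrow> prob_space (p i)"
    and lb: "\<And>i y y'. i < n \<Longrightarrow> 0 \<le> loss i y y' \<and> loss i y y' \<le> 1"
    and meas: "\<And>i. i < n \<Longrightarrow> (\<lambda>z. loss i (snd z) (g i (fst z))) \<in> borel_measurable (p i)"
    and b0: "0 \<le> b"
    and T_def: "T = {t. 0 \<le> t \<and> t < true_risk n p loss g \<and> kl t (true_risk n p loss g) > ereal b}"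
  shows "{s \<in> space (sample_measure n m p). \<exists>t\<in>T. emp_risk n m loss s g \<le> t} \<in> sets (sample_measure n m p)
     \<and> measure (sample_measure n m p) {s \<in> space (sample_measure n m p). \<exists>t\<in>T. emp_risk n m loss s g \<le> t}
         \<le> exp (- b) ^ (m*n)"
proof -
  define S where "S = sample_measure n m p"
  define f where "f = (\<lambda>s. emp_risk n m loss s g)"
  define B where "B = exp (- b) ^ (m*n)"
  define G where "G = {s \<in> space S. \<exists>t\<in>T. f s \<le> t}"
  have fm[measurable]: "f \<in> borel_measurable S" unfolding f_def S_def by (rule emp_meas[OF n1 meas])
  interpret S: prob_space S unfolding S_def sample_measure_def
    by (rule prob_space_PiM) (use ps in auto)
  have key: "measure S {s \<in> space S. f s \<le> t} \<le> B" if "t \<in> T" for t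
    unfolding S_def f_def B_def
    by (rule chernoff_T[OF n1 m1 ps lb meas b0]) (use that T_def in auto)
  have "G \<in> sets S \<and> measure S G \<le> B"
  proof (cases "T = {}")
    case True
    then have "G = {}" unfolding G_def by auto
    then show ?thesis unfolding B_def by simp
  next
    case Tne: False
    have bdd: "bdd_above T" unfolding T_def by (rule bdd_aboveI[of _ "true_risk n p loss g"]) auto
    define c where "c = Sup T"
    have upper: "t \<le> c" if "t \<in> T" for t unfolding c_def by (rule cSup_upper[OF that bdd])
    show ?thesis
    proof (cases "c \<in> T")
      case True
      have "G = {s \<in> space S. f s \<le> c}" unfolding G_def using True upper by force
      then show ?thesis using key[OF True] by simp
    next
      case False
      have Geq: "G = {s \<in> space S. f s < c}"
      proof
        show "G \<subseteq> {s \<in> space S. f s < c}"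
          unfolding G_def using upper False by (force simp: order.order_iff_strict)
        show "{s \<in> space S. f s < c} \<subseteq> G"
        proof
          fix s assume s: "s \<in> {s \<in> space S. f s < c}"
          then obtain t where "t \<in> T" "f s < t" unfolding c_def using less_cSup_iff[OF Tne bdd] by auto
          then show "s \<in> G" using s unfolding G_def by (auto intro: less_imp_le)
        qed
      qed
      define Gk where "Gk = (\<lambda>k::nat. {s \<in> space S. f s \<le> c - 1 / Suc k})"
      have Gk_sets: "range Gk \<subseteq> sets S" unfolding Gk_def by auto
      have inc: "incseq Gk"
      proof (rule incseq_SucI)
        fix k
        have "1 / real (Suc (Suc k)) \<le> 1 / real (Suc k)" by (simp add: frac_le)
        then show "Gk k \<subseteq> Gk (Suc k)" unfolding Gk_def by auto
      qed
      have UG: "(\<Union>k. Gk k) = G"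
      proof
        show "(\<Union>k. Gk k) \<subseteq> G"
        proof
          fix s assume "s \<in> (\<Union>k. Gk k)"
          then obtain k where k: "s \<in> space S" "f s \<le> c - 1 / Suc k" unfolding Gk_def by auto
          have "0 < 1 / real (Suc k)" by simp
          then have "f s < c" using k by linarith
          then show "s \<in> G" unfolding Geq using k by auto
        qed
        show "G \<subseteq> (\<Union>k. Gk k)"
        proof
          fix s assume "s \<in> G"
          then have s: "s \<in> space S" "f s < c" unfolding Geq by auto
          then obtain k where "inverse (real (Suc k)) < c - f s"
            using reals_Archimedean[of "c - f s"] by auto
          then have "f s \<le> c - 1 / Suc k" by (simp add: inverse_eq_divide)
          then show "s \<in> (\<Union>k. Gk k)" using s unfolding Gk_def by auto
        qed
      qed
      have Gk_le: "measure S (Gk k) \<le> B" for k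
      proof -
        have "c - 1 / Suc k < c" by simp
        then obtain t where t: "t \<in> T" "c - 1 / Suc k < t" unfolding c_def using less_cSup_iff[OF Tne bdd] by auto
        have "Gk k \<subseteq> {s \<in> space S. f s \<le> t}" unfolding Gk_def using t by auto
        then have "measure S (Gk k) \<le> measure S {s \<in> space S. f s \<le> t}"
          by (intro S.finite_measure_mono) auto
        then show ?thesis using key[OF t(1)] by simp
      qed
      have lim: "(\<lambda>k. measure S (Gk k)) \<longlonglongrightarrow> measure S (\<Union>k. Gk k)"
        by (rule S.finite_Lim_measure_incseq[OF Gk_sets inc])
      have "measure S G \<le> B"
        using LIMSEQ_le_const2[OF lim[unfolded UG]] Gk_le by blast
      moreover have "G \<in> sets S" unfolding Geq by measurable
      ultimately show ?thesis by simp
    qed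
  qed
  then show ?thesis unfolding G_def S_def f_def B_def .
qed


lemma kl_same: "kl q q = 0"
  unfolding kl_def xlog_ratio_def by simp

lemma kl_inv_bad:
  fixes q b R :: real
  assumes q: "0 \<le> q" "q \<le> 1" and b0: "0 \<le> b" and R: "R \<le> 1" and gt: "R > kl_inv q b"
  shows "q < R \<and> kl q R > ereal b"
proof -
  define SS where "SS = {p \<in> {0..1}. kl q p \<le> ereal b}"
  have qS: "q \<in> SS" unfolding SS_def using q b0 by (simp add: kl_same zero_ereal_def)
  have bdd: "bdd_above SS" unfolding SS_def by (rule bdd_aboveI[of _ 1]) auto
  have "q \<le> Sup SS" by (rule cSup_upper[OF qS bdd])
  then have "q < R" using gt unfolding kl_inv_def SS_def by simp
  moreover have "R \<notin> SS"
  proof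
    assume "R \<in> SS"
    then have "R \<le> Sup SS" by (rule cSup_upper[OF _ bdd])
    then show False using gt unfolding kl_inv_def SS_def by simp
  qed
  then have "\<not> kl q R \<le> ereal b" unfolding SS_def using q \<open>q < R\<close> R by auto
  ultimately show ?thesis by (simp add: not_le)
qed

lemma emp_bounds:
  fixes loss :: "nat \<Rightarrow> 'y \<Rightarrow> 'y \<Rightarrow> real"
  assumes n1: "n \<ge> 1" and m1: "m \<ge> 1"
    and lb: "\<And>i y y'. i < n \<Longrightarrow> 0 \<le> loss i y y' \<and> loss i y y' \<le> 1"
  shows "0 \<le> emp_risk n m loss s g \<and> emp_risk n m loss s g \<le> 1"
proof -
  have "(\<Sum>i<n. \<Sum>j<m. loss i (snd (s (i, j))) (g i (fst (s (i, j))))) \<le> (\<Sum>i<n. \<Sum>j<m. 1)"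
    by (intro sum_mono) (use lb in auto)
  moreover have "0 \<le> (\<Sum>i<n. \<Sum>j<m. loss i (snd (s (i, j))) (g i (fst (s (i, j)))))"
    by (intro sum_nonneg) (use lb in auto)
  ultimately show ?thesis using n1 m1 unfolding emp_risk_def by (simp add: field_simps)
qed

lemma weight_bound:
  fixes \<delta> :: real and k N :: nat
  assumes d0: "\<delta> > 0" and N1: "N \<ge> 1"
  shows "exp (- (((real k * ln 2 + ln (2 * sqrt (real N) / \<delta>)) / real N))) ^ N \<le> \<delta> * (1/2)^k"
proof -
  have sq: "sqrt (real N) \<ge> 1" using N1 by simp
  have "exp (- (((real k * ln 2 + ln (2 * sqrt (real N) / \<delta>)) / real N))) ^ N
      = exp (real N * (- (((real k * ln 2 + ln (2 * sqrt (real N) / \<delta>)) / real N))))"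
    by (rule exp_of_nat_mult[symmetric])
  also have "\<dots> = exp (- (real k * ln 2) - ln (2 * sqrt (real N) / \<delta>))"
    using N1 by (simp add: field_simps)
  also have "\<dots> = (1/2)^k * (\<delta> / (2 * sqrt (real N)))"
  proof -
    have e1: "exp (real k * ln 2) = 2 ^ k" by (simp add: exp_of_nat_mult)
    have e2: "exp (ln (2 * sqrt (real N) / \<delta>)) = 2 * sqrt (real N) / \<delta>" using d0 sq by simp
    show ?thesis unfolding exp_diff exp_minus e1 e2 by (simp add: power_one_over field_simps)
  qed
  also have "\<dots> \<le> (1/2)^k * \<delta>"
  proof (rule mult_left_mono)
    have x1: "1 \<le> 2 * sqrt (real N)" using sq by linarith
    have "\<delta> * 1 \<le> \<delta> * (2 * sqrt (real N))" by (rule mult_left_mono[OF x1]) (use d0 in simp)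
    then show "\<delta> / (2 * sqrt (real N)) \<le> \<delta>" using x1 d0 by (simp add: divide_le_eq)
  qed simp
  finally show ?thesis by (simp add: mult.commute)
qed


theorem corollary1:
  fixes F :: "('x \<Rightarrow> 'y) set"
    and n m :: nat
    and p :: "nat \<Rightarrow> ('x \<times> 'y) measure"
    and loss :: "nat \<Rightarrow> 'y \<Rightarrow> 'y \<Rightarrow> real"
    and Ecal :: "'e set"
    and l :: "'e \<Rightarrow> nat"
    and lE :: "'e \<Rightarrow> ('x \<Rightarrow> 'y) list \<Rightarrow> nat"
    and \<delta> :: real
  assumes "n \<ge> 1" and "m \<ge> 1"
    and "\<And>i. i < n \<Longrightarrow> prob_space (p i)"
    and "\<And>i y y'. i < n \<Longrightarrow> 0 \<le> loss i y y' \<and> loss i y y' \<le> 1"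
    and "\<And>i f. i < n \<Longrightarrow> f \<in> F \<Longrightarrow> (\<lambda>z. loss i (snd z) (f (fst z))) \<in> borel_measurable (p i)"
    and "is_code_length l Ecal"
    and "\<And>E. E \<in> Ecal \<Longrightarrow> is_code_length (lE E) {fs. fs \<noteq> [] \<and> set fs \<subseteq> F}"
    and "\<delta> > 0"
  shows "\<exists>A \<in> sets (sample_measure n m p).
           measure (sample_measure n m p) A \<ge> 1 - \<delta> \<and>
           (\<forall>s\<in>A. \<forall>E\<in>Ecal. \<forall>f. (\<forall>i<n. f i \<in> F) \<longrightarrow>
              true_risk n p loss f \<le>
              kl_inv (emp_risk n m loss s f)
                (((real (l E) + real (lE E (map f [0..<n]))) * ln 2
                  + ln (2 * sqrt (real m * real n) / \<delta>)) / (real m * real n)))"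
proof (cases "\<delta> \<ge> 1")
  case True
  show ?thesis by (rule bexI[of _ "{}"]) (use True in auto)
next
  case False
  then have d1: "\<delta> < 1" by simp
  have n1: "n \<ge> 1" and m1: "m \<ge> 1" and d0: "\<delta> > 0" using assms by auto
  note ps = assms(3) and lb = assms(4) and measF = assms(5)
  define S where "S = sample_measure n m p"
  interpret S: prob_space S unfolding S_def sample_measure_def
    by (rule prob_space_PiM) (use ps in auto)
  define FL where "FL = {fs::('x\<Rightarrow>'y) list. fs \<noteq> [] \<and> set fs \<subseteq> F}"
  obtain C1 where C1: "prefix_free_on C1 Ecal" "\<forall>z\<in>Ecal. l z = length (C1 z)"
    using assms(6) unfolding is_code_length_def by blast
  have "\<forall>E\<in>Ecal. \<exists>C. prefix_free_on C FL \<and> (\<forall>z\<in>FL. lE E z = length (C z))"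
    using assms(7) unfolding is_code_length_def FL_def by blast
  then obtain C2 where C2: "\<forall>E\<in>Ecal. prefix_free_on (C2 E) FL \<and> (\<forall>z\<in>FL. lE E z = length (C2 E z))"
    by (metis bchoice)
  define P where "P = {(E, fs). E \<in> Ecal \<and> fs \<in> FL \<and> length fs = n}"
  define code where "code = (\<lambda>pr. C1 (fst pr) @ C2 (fst pr) (snd pr))"
  have code_pf: "\<not> prefix (code pr) (code pr')" if pr: "pr \<in> P" "pr' \<in> P" "pr \<noteq> pr'" for pr pr'
  proof
    assume pre: "prefix (code pr) (code pr')"
    obtain E fs where e1: "pr = (E, fs)" by (cases pr)
    obtain E' fs' where e2: "pr' = (E', fs')" by (cases pr')
    have EE: "E \<in> Ecal" "E' \<in> Ecal" "fs \<in> FL" "fs' \<in> FL" using pr e1 e2 unfolding P_def by auto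
    have p1: "prefix (C1 E) (code pr')" using pre e1 unfolding code_def
      by (metis fst_conv prefix_order.trans prefixI)
    have p2: "prefix (C1 E') (code pr')" using e2 unfolding code_def by simp
    have "E = E'"
    proof (rule ccontr)
      assume "E \<noteq> E'"
      then have "\<not> prefix (C1 E) (C1 E')" "\<not> prefix (C1 E') (C1 E)"
        using C1(1) EE unfolding prefix_free_on_def by auto
      then show False using prefix_same_cases[OF p1 p2] by auto
    qed
    then have "prefix (C2 E fs) (C2 E fs')" using pre e1 e2 unfolding code_def by simp
    moreover have "fs \<noteq> fs'" using \<open>E = E'\<close> pr(3) e1 e2 by simp
    ultimately show False using C2 EE unfolding prefix_free_on_def by blast
  qed
  have inj: "inj_on code P"
  proof (rule inj_onI)
    fix x y assume "x \<in> P" "y \<in> P" "code x = code y"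
    then show "x = y" using code_pf[of x y] by auto
  qed
  have pf: "pfree (code ` P)" unfolding pfree_def using code_pf by blast
  have cP: "countable P"
    by (rule countable_image_inj_on[OF _ inj]) (rule countable_subset[of _ UNIV]; simp)
  define g where "g = (\<lambda>fs::('x\<Rightarrow>'y) list. \<lambda>i. fs ! i)"
  define bb where "bb = (\<lambda>pr. ((real (l (fst pr)) + real (lE (fst pr) (snd pr))) * ln 2
                  + ln (2 * sqrt (real m * real n) / \<delta>)) / (real m * real n))"
  define T where "T = (\<lambda>pr. {t. 0 \<le> t \<and> t < true_risk n p loss (g (snd pr))
                      \<and> kl t (true_risk n p loss (g (snd pr))) > ereal (bb pr)})"
  define Bad where "Bad = (\<lambda>pr. {s \<in> space S. \<exists>t\<in>T pr. emp_risk n m loss s (g (snd pr)) \<le> t})"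
  have meas_g: "(\<lambda>z. loss i (snd z) (g (snd pr) i (fst z))) \<in> borel_measurable (p i)"
    if "pr \<in> P" "i < n" for pr i
  proof -
    have "snd pr ! i \<in> set (snd pr)" using that unfolding P_def by auto
    then have "g (snd pr) i \<in> F" using that unfolding P_def FL_def g_def by auto
    then show ?thesis using measF that(2) by blast
  qed
  have bb0: "0 \<le> bb pr" for pr
  proof -
    have "(1::nat) \<le> m * n" using n1 m1 by simp
    then have "real (m * n) \<ge> 1" by linarith
    then have "real m * real n \<ge> 1" by simp
    then have sq: "sqrt (real m * real n) \<ge> 1" by simp
    have "\<delta> \<le> 2 * sqrt (real m * real n)" using sq d1 by linarith
    then have "1 \<le> 2 * sqrt (real m * real n) / \<delta>" using d0 by (simp add: le_divide_eq)
    then have "0 \<le> ln (2 * sqrt (real m * real n) / \<delta>)" by simp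
    then show ?thesis unfolding bb_def by (intro divide_nonneg_nonneg add_nonneg_nonneg) auto
  qed
  have bad_pr: "Bad pr \<in> sets S \<and> measure S (Bad pr) \<le> exp (- bb pr) ^ (m*n)" if "pr \<in> P" for pr
    unfolding Bad_def S_def
    by (rule bad_set[OF n1 m1 ps lb meas_g[OF that] bb0]) (auto simp: T_def)
  have bad_le: "measure S (Bad pr) \<le> \<delta> * (1/2) ^ length (code pr)" if pr: "pr \<in> P" for pr
  proof -
    have len: "length (code pr) = l (fst pr) + lE (fst pr) (snd pr)"
      using pr C1 C2 unfolding code_def P_def by auto
    have "bb pr = (real (length (code pr)) * ln 2 + ln (2 * sqrt (real (m*n)) / \<delta>)) / real (m*n)"
      unfolding bb_def len by simp
    then have "exp (- bb pr) ^ (m*n) \<le> \<delta> * (1/2) ^ length (code pr)"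
      using weight_bound[OF d0, of "m*n" "length (code pr)"] n1 m1 by simp
    then show ?thesis using bad_pr[OF pr] by linarith
  qed
  define U where "U = \<Union>(Bad ` P)"
  have U_sets: "U \<in> sets S" unfolding U_def using bad_pr cP by (intro sets.countable_UN') auto
  have "emeasure S U \<le> (\<integral>\<^sup>+pr. emeasure S (Bad pr) \<partial>count_space P)"
    unfolding U_def by (rule emeasure_UN_le_count[OF cP]) (use bad_pr in auto)
  also have "\<dots> \<le> (\<integral>\<^sup>+pr. ennreal \<delta> * ennreal ((1/2) ^ length (code pr)) \<partial>count_space P)"
  proof (rule nn_integral_mono)
    fix pr assume "pr \<in> space (count_space P)"
    then have pr: "pr \<in> P" by simp
    have "emeasure S (Bad pr) = ennreal (measure S (Bad pr))" by (simp add: S.emeasure_eq_measure)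
    also have "\<dots> \<le> ennreal (\<delta> * (1/2) ^ length (code pr))" using bad_le[OF pr] by (rule ennreal_leI)
    also have "\<dots> = ennreal \<delta> * ennreal ((1/2) ^ length (code pr))" using d0 by (simp add: ennreal_mult)
    finally show "emeasure S (Bad pr) \<le> ennreal \<delta> * ennreal ((1/2) ^ length (code pr))" .
  qed
  also have "\<dots> = ennreal \<delta> * (\<integral>\<^sup>+pr. ennreal ((1/2) ^ length (code pr)) \<partial>count_space P)"
    by (rule nn_integral_cmult) simp
  also have "(\<integral>\<^sup>+pr. ennreal ((1/2) ^ length (code pr)) \<partial>count_space P)
      = (\<integral>\<^sup>+w. ennreal ((1/2) ^ length w) \<partial>count_space (code ` P))"
    by (rule nn_integral_bij_count_space[OF inj_on_imp_bij_betw[OF inj]])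
  also have "ennreal \<delta> * \<dots> \<le> ennreal \<delta> * 1"
    by (rule mult_left_mono[OF kraft_countable[OF pf]]) simp
  finally have "emeasure S U \<le> ennreal \<delta>" by simp
  then have mU: "measure S U \<le> \<delta>" using d0 by (simp add: S.emeasure_eq_measure)
  define A where "A = space S - U"
  have A_sets: "A \<in> sets S" unfolding A_def using U_sets by auto
  have mA: "measure S A \<ge> 1 - \<delta>" unfolding A_def using S.prob_compl[OF U_sets] mU by simp
  show ?thesis
  proof (rule bexI[of _ A])
    show "A \<in> sets (sample_measure n m p)" using A_sets S_def by simp
    show "measure (sample_measure n m p) A \<ge> 1 - \<delta> \<and>
           (\<forall>s\<in>A. \<forall>E\<in>Ecal. \<forall>f. (\<forall>i<n. f i \<in> F) \<longrightarrow>
              true_risk n p loss f \<le>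
              kl_inv (emp_risk n m loss s f)
                (((real (l E) + real (lE E (map f [0..<n]))) * ln 2
                  + ln (2 * sqrt (real m * real n) / \<delta>)) / (real m * real n)))"
    proof (intro conjI ballI allI impI)
      show "measure (sample_measure n m p) A \<ge> 1 - \<delta>" using mA S_def by simp
    next
      fix s E f assume s: "s \<in> A" and E: "E \<in> Ecal" and f: "\<forall>i<n. f i \<in> F"
      define fs where "fs = map f [0..<n]"
      have prP: "(E, fs) \<in> P" unfolding P_def FL_def fs_def using E f n1 by auto
      have gf: "g fs i = f i" if "i < n" for i unfolding g_def fs_def using that by simp
      have tr: "true_risk n p loss f = true_risk n p loss (g fs)"
        unfolding true_risk_def using gf by (intro arg_cong2[where f="(*)"] refl sum.cong) auto
      have er: "emp_risk n m loss s f = emp_risk n m loss s (g fs)"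
        unfolding emp_risk_def using gf by (intro arg_cong2[where f="(*)"] refl sum.cong) auto
      have Rb: "true_risk n p loss (g fs) \<le> 1"
        using risk_bounds[OF n1 ps lb meas_g[OF prP]] by simp
      have qb: "0 \<le> emp_risk n m loss s (g fs) \<and> emp_risk n m loss s (g fs) \<le> 1"
        by (rule emp_bounds[OF n1 m1 lb])
      show "true_risk n p loss f \<le>
              kl_inv (emp_risk n m loss s f)
                (((real (l E) + real (lE E (map f [0..<n]))) * ln 2
                  + ln (2 * sqrt (real m * real n) / \<delta>)) / (real m * real n))"
      proof (rule ccontr)
        assume "\<not> ?thesis"
        then have gt: "true_risk n p loss (g fs) > kl_inv (emp_risk n m loss s (g fs)) (bb (E, fs))"
          unfolding tr er bb_def fs_def by simp
        have "emp_risk n m loss s (g fs) < true_risk n p loss (g fs) \<and>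
              kl (emp_risk n m loss s (g fs)) (true_risk n p loss (g fs)) > ereal (bb (E, fs))"
          by (rule kl_inv_bad[OF _ _ bb0 Rb gt]) (use qb in auto)
        then have "emp_risk n m loss s (g fs) \<in> T (E, fs)" unfolding T_def using qb by simp
        moreover have "s \<in> space S" using s unfolding A_def by simp
        ultimately have "s \<in> Bad (E, fs)" unfolding Bad_def by auto
        then have "s \<in> U" unfolding U_def using prP by auto
        then show False using s unfolding A_def by simp
      qed
    qed
  qed
qed


end
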